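(* Let $X$ be a spectrally extremal graph of diameter $d$ with adjacency matrix $A$ and distinct eigenvalues $\theta_0 > \dots > \theta_d$. Suppose $X$ admits perfect state transfer at time $\tau$ between vertices $u$ and $v$ with $d(u,v) = d$. Then for all vertices $z,w$ with $d(z,w) = d$ we have $(A^d)_{z,w} \le (A^d)_{u,v}$, and equality holds if and only if $X$ admits perfect state transfer between $z$ and $w$ at time $\tau$.
   Context: $X$ is a finite simple connected graph. A graph of diameter $d$ has at least $d+1$ distinct adjacency eigenvalues; it is spectrally extremal if it has exactly $d+1$. $e_w$ denotes the standard basis vector of vertex $w$. $X$ admits perfect state transfer between $u$ and $v$ at time $\tau$ if $|e_v^T \exp(\mathrm{i}\tau A) e_u| = 1$. *)

theory Defs
  imports Complex_Main "Jordan_Normal_Form.Char_Poly"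
begin

definition simple_graph :: "nat \<Rightarrow> (nat \<Rightarrow> nat \<Rightarrow> bool) \<Rightarrow> bool" where
  "simple_graph n E \<longleftrightarrow> (\<forall>i j. E i j \<longrightarrow> i < n \<and> j < n) \<and> (\<forall>i j. E i j \<longrightarrow> E j i) \<and> (\<forall>i. \<not> E i i)"

definition adj_mat :: "nat \<Rightarrow> (nat \<Rightarrow> nat \<Rightarrow> bool) \<Rightarrow> real mat" where
  "adj_mat n E = mat n n (\<lambda>(i,j). if E i j then 1 else 0)"

definition walk_of_len :: "nat \<Rightarrow> (nat \<Rightarrow> nat \<Rightarrow> bool) \<Rightarrow> nat \<Rightarrow> nat \<Rightarrow> nat \<Rightarrow> bool" where
  "walk_of_len n E k u v \<longleftrightarrow> (\<exists>p::nat \<Rightarrow> nat. p 0 = u \<and> p k = v \<and> (\<forall>i\<le>k. p i < n) \<and> (\<forall>i<k. E (p i) (p (Suc i))))"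

definition connected_graph :: "nat \<Rightarrow> (nat \<Rightarrow> nat \<Rightarrow> bool) \<Rightarrow> bool" where
  "connected_graph n E \<longleftrightarrow> 0 < n \<and> (\<forall>u<n. \<forall>v<n. \<exists>k. walk_of_len n E k u v)"

definition graph_dist :: "nat \<Rightarrow> (nat \<Rightarrow> nat \<Rightarrow> bool) \<Rightarrow> nat \<Rightarrow> nat \<Rightarrow> nat" where
  "graph_dist n E u v = (LEAST k. walk_of_len n E k u v)"

definition diameter :: "nat \<Rightarrow> (nat \<Rightarrow> nat \<Rightarrow> bool) \<Rightarrow> nat" where
  "diameter n E = Max {graph_dist n E u v | u v. u < n \<and> v < n}"

definition spectrally_extremal :: "nat \<Rightarrow> (nat \<Rightarrow> nat \<Rightarrow> bool) \<Rightarrow> bool" where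
  "spectrally_extremal n E \<longleftrightarrow> card {\<theta>. eigenvalue (adj_mat n E) \<theta>} = diameter n E + 1"

definition transition_entry :: "nat \<Rightarrow> (nat \<Rightarrow> nat \<Rightarrow> bool) \<Rightarrow> real \<Rightarrow> nat \<Rightarrow> nat \<Rightarrow> complex" where
  "transition_entry n E t v u =
     (\<Sum>k. (\<i> * complex_of_real t) ^ k / of_nat (fact k) * complex_of_real ((adj_mat n E ^\<^sub>m k) $$ (v, u)))"

definition pst :: "nat \<Rightarrow> (nat \<Rightarrow> nat \<Rightarrow> bool) \<Rightarrow> real \<Rightarrow> nat \<Rightarrow> nat \<Rightarrow> bool" where
  "pst n E t u v \<longleftrightarrow> cmod (transition_entry n E t v u) = 1"

end

theory Submission
  imports Defs "Jordan_Normal_Form.Schur_Decomposition"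
begin


lemma sym_real_ev_real:
  fixes A :: "real mat"
  assumes A: "A \<in> carrier_mat n n" and sym: "\<And>i j. i < n \<Longrightarrow> j < n \<Longrightarrow> A $$ (i,j) = A $$ (j,i)"
    and ev: "eigenvalue (map_mat complex_of_real A) l"
  shows "l = complex_of_real (Re l)"
proof -
  let ?B = "map_mat complex_of_real A"
  obtain v where v: "v \<in> carrier_vec n" "v \<noteq> 0\<^sub>v n" "?B *\<^sub>v v = l \<cdot>\<^sub>v v"
    using ev A unfolding eigenvalue_def eigenvector_def by auto
  have row: "(\<Sum>j<n. complex_of_real (A $$ (i,j)) * v $ j) = l * v $ i" if "i < n" for i
  proof -
    have "(?B *\<^sub>v v) $ i = l * v $ i" using v(3) v(1) that by (metis index_smult_vec(1) carrier_vecD)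
    moreover have "(?B *\<^sub>v v) $ i = (\<Sum>j<n. complex_of_real (A $$ (i,j)) * v $ j)"
      using that A v(1) by (auto simp: scalar_prod_def lessThan_atLeast0 intro!: sum.cong)
    ultimately show ?thesis by simp
  qed
  define s where "s = (\<Sum>i<n. cnj (v $ i) * (\<Sum>j<n. complex_of_real (A $$ (i,j)) * v $ j))"
  define N where "N = (\<Sum>i<n. cnj (v $ i) * v $ i)"
  have sN: "s = l * N" unfolding s_def N_def using row by (simp add: sum_distrib_left mult_ac)
  have "cnj s = (\<Sum>i<n. v $ i * (\<Sum>j<n. complex_of_real (A $$ (i,j)) * cnj (v $ j)))"
    unfolding s_def by (simp add: cnj_sum)
  also have "\<dots> = (\<Sum>i<n. \<Sum>j<n. complex_of_real (A $$ (i,j)) * v $ i * cnj (v $ j))"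
    by (simp add: sum_distrib_left mult_ac)
  also have "\<dots> = (\<Sum>j<n. \<Sum>i<n. complex_of_real (A $$ (i,j)) * v $ i * cnj (v $ j))"
    by (rule sum.swap)
  also have "\<dots> = s" unfolding s_def
    by (auto simp: sum_distrib_left mult_ac sym intro!: sum.cong)
  finally have cs: "cnj s = s" .
  have NR: "N = complex_of_real (\<Sum>i<n. (cmod (v $ i))^2)"
    unfolding N_def of_real_sum by (rule sum.cong) (auto simp: complex_norm_square mult.commute simp del: of_real_power)
  have "\<exists>i<n. v $ i \<noteq> 0" using v(1,2) by (metis carrier_vecD eq_vecI index_zero_vec(1) index_zero_vec(2))
  then obtain i where i: "i < n" "v $ i \<noteq> 0" by blast
  have "(\<Sum>i<n. (cmod (v $ i))^2) > 0"
    by (rule sum_pos2[of _ i]) (use i in auto)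
  hence N0: "N \<noteq> 0" and cN: "cnj N = N" unfolding NR by (auto simp del: of_real_sum of_real_power)
  have "cnj l * N = l * N" using cs sN cN by (metis complex_cnj_mult)
  hence "cnj l = l" using N0 by simp
  thus ?thesis by (metis Reals_cnj_iff complex_is_Real_iff of_real_Re)
qed


interpretation cr: map_poly_comm_ring_hom "complex_of_real :: real \<Rightarrow> complex" ..

lemma map_poly_of_real_linprod:
  "map_poly complex_of_real (prod_list (map (\<lambda>a. [:-a,1:]) es)) = prod_list (map (\<lambda>a. [:-complex_of_real a,1:]) es)"
proof (induct es)
  case (Cons a es)
  show ?case by (simp only: list.map prod_list.Cons cr.hom_mult Cons) simp
qed simp

lemma sym_char_poly_splits:
  fixes A :: "real mat"
  assumes A: "A \<in> carrier_mat n n" and sym: "\<And>i j. i < n \<Longrightarrow> j < n \<Longrightarrow> A $$ (i,j) = A $$ (j,i)"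
  shows "\<exists>es. char_poly A = (\<Prod>e\<leftarrow>es. [:-e,1:])"
proof -
  let ?B = "map_mat complex_of_real A"
  have B: "?B \<in> carrier_mat n n" using A by auto
  obtain as where as: "char_poly ?B = (\<Prod>a\<leftarrow>as. [:-a,1:])"
    using char_poly_factorized[OF B] by blast
  have real: "a = complex_of_real (Re a)" if "a \<in> set as" for a
  proof -
    have "poly (char_poly ?B) a = 0" unfolding as poly_prod_list
      using that by (auto simp: prod_list_zero_iff)
    hence "eigenvalue ?B a" using eigenvalue_root_char_poly[OF B] by simp
    thus ?thesis using sym_real_ev_real[OF A sym] by blast
  qed
  have "(\<Prod>a\<leftarrow>as. [:-a,1:]) = (\<Prod>a\<leftarrow>map Re as. [:-complex_of_real a,1:])"
    using real by (induct as) auto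
  also have "\<dots> = map_poly complex_of_real (\<Prod>a\<leftarrow>map Re as. [:-a,1:])"
    by (rule map_poly_of_real_linprod[symmetric])
  finally have X: "char_poly ?B = map_poly complex_of_real (\<Prod>a\<leftarrow>map Re as. [:-a,1:])"
    using as by simp
  have "map_poly complex_of_real (char_poly A) = map_poly complex_of_real (\<Prod>a\<leftarrow>map Re as. [:-a,1:])"
  proof -
    have "char_poly ?B = map_poly complex_of_real (char_poly A)" by (rule of_real_hom.char_poly_hom[OF A])
    thus ?thesis using X by simp
  qed
  hence "map_poly Re (map_poly complex_of_real (char_poly A)) = map_poly Re (map_poly complex_of_real (\<Prod>a\<leftarrow>map Re as. [:-a,1:]))"
    by simp
  hence "char_poly A = (\<Prod>a\<leftarrow>map Re as. [:-a,1:])" by (simp add: map_poly_map_poly o_def)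
  thus ?thesis by blast
qed

definition rprod :: "nat \<Rightarrow> real mat \<Rightarrow> real list \<Rightarrow> real mat" where
  "rprod n X L = foldl (\<lambda>M e. M * (X - e \<cdot>\<^sub>m 1\<^sub>m n)) (1\<^sub>m n) L"

lemma rprod_carrier: "X \<in> carrier_mat n n \<Longrightarrow> rprod n X L \<in> carrier_mat n n"
  unfolding rprod_def by (induct L rule: rev_induct) auto

lemma rprod_snoc: "rprod n X (L @ [e]) = rprod n X L * (X - e \<cdot>\<^sub>m 1\<^sub>m n)"
  unfolding rprod_def by simp

lemma tri_CH:
  fixes B :: "real mat"
  assumes B: "B \<in> carrier_mat n n" and ut: "upper_triangular B" and k: "k \<le> n"
  shows "\<forall>i<n. \<forall>j<k. rprod n B (map (\<lambda>i. B $$ (i,i)) [0..<k]) $$ (i,j) = 0"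
  using k
proof (induct k)
  case 0 then show ?case by simp
next
  case (Suc k)
  let ?M = "rprod n B (map (\<lambda>i. B $$ (i,i)) [0..<k])"
  let ?C = "B - B $$ (k,k) \<cdot>\<^sub>m 1\<^sub>m n"
  have IH: "\<And>i j. i < n \<Longrightarrow> j < k \<Longrightarrow> ?M $$ (i,j) = 0" using Suc by auto
  have M: "?M \<in> carrier_mat n n" by (rule rprod_carrier[OF B])
  have eq: "rprod n B (map (\<lambda>i. B $$ (i,i)) [0..<Suc k]) = ?M * ?C"
    by (simp add: rprod_snoc)
  show ?case
  proof (intro allI impI)
    fix i j assume i: "i < n" and j: "j < Suc k"
    have "(?M * ?C) $$ (i,j) = (\<Sum>l = 0..<n. ?M $$ (i,l) * ?C $$ (l,j))"
      using M B i j Suc.prems by (auto simp: scalar_prod_def)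
    also have "\<dots> = 0"
    proof (rule sum.neutral, intro ballI)
      fix l assume l: "l \<in> {0..<n}"
      show "?M $$ (i,l) * ?C $$ (l,j) = 0"
      proof (cases "l < k")
        case True then show ?thesis using IH[OF i] by simp
      next
        case False
        show ?thesis
        proof (cases "j < l")
          case True
          have "B $$ (l,j) = 0" using ut B l True unfolding upper_triangular_def by auto
          then show ?thesis using True l j Suc.prems B by auto
        next
          case False': False
          hence "l = k" "j = k" using False j by auto
          then show ?thesis using l B Suc.prems by auto
        qed
      qed
    qed
    finally show "rprod n B (map (\<lambda>i. B $$ (i,i)) [0..<Suc k]) $$ (i,j) = 0" using eq by simp
  qed
qed

lemma rprod_similar:
  fixes A B P Q :: "real mat"
  assumes A: "A \<in> carrier_mat n n" and B: "B \<in> carrier_mat n n" and P: "P \<in> carrier_mat n n" and Q: "Q \<in> carrier_mat n n"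
    and PQ: "P * Q = 1\<^sub>m n" and QP: "Q * P = 1\<^sub>m n" and APBQ: "A = P * B * Q"
  shows "rprod n A L = P * rprod n B L * Q"
proof (induct L rule: rev_induct)
  case Nil
  then show ?case using PQ P by (simp add: rprod_def)
next
  case (snoc e L)
  have I: "1\<^sub>m n \<in> carrier_mat n n" by simp
  have fac: "A - e \<cdot>\<^sub>m 1\<^sub>m n = P * (B - e \<cdot>\<^sub>m 1\<^sub>m n) * Q"
  proof -
    have "P * (B - e \<cdot>\<^sub>m 1\<^sub>m n) = P * B - e \<cdot>\<^sub>m P"
      using mult_minus_distrib_mat[OF P B smult_carrier_mat[OF I]] mult_smult_distrib[OF P I] P by simp
    moreover have "(P * B - e \<cdot>\<^sub>m P) * Q = P * B * Q - e \<cdot>\<^sub>m (P * Q)"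
      using minus_mult_distrib_mat[of "P*B" n n "e \<cdot>\<^sub>m P" Q n] P B Q mult_smult_assoc_mat[OF P Q] by simp
    ultimately show ?thesis using APBQ PQ by simp
  qed
  let ?R = "rprod n B L" and ?C = "B - e \<cdot>\<^sub>m 1\<^sub>m n"
  have R: "?R \<in> carrier_mat n n" by (rule rprod_carrier[OF B])
  have C: "?C \<in> carrier_mat n n" by (rule minus_carrier_mat) simp
  have "rprod n A (L @ [e]) = (P * ?R * Q) * (P * ?C * Q)" using snoc fac by (simp add: rprod_snoc)
  also have "\<dots> = P * ?R * (Q * P) * ?C * Q"
    using P Q R C by (simp add: assoc_mult_mat[of _ n n _ n _ n])
  also have "\<dots> = P * (?R * ?C) * Q" using QP P Q R C by (simp add: assoc_mult_mat[of _ n n _ n _ n])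
  finally show ?case by (simp add: rprod_snoc)
qed



lemma mult_entry: "X \<in> carrier_mat n n \<Longrightarrow> Y \<in> carrier_mat n n \<Longrightarrow> i < n \<Longrightarrow> j < n \<Longrightarrow>
  (X * Y) $$ (i,j) = (\<Sum>l<n. X $$ (i,l) * Y $$ (l,j))"
  by (auto simp: scalar_prod_def lessThan_atLeast0 intro!: sum.cong)

definition pA :: "nat \<Rightarrow> real mat \<Rightarrow> real list \<Rightarrow> real mat" where
  "pA n A L = foldr (\<lambda>e M. (A - e \<cdot>\<^sub>m 1\<^sub>m n) * M) L (1\<^sub>m n)"

lemma pA_Nil[simp]: "pA n A [] = 1\<^sub>m n" by (simp add: pA_def)
lemma pA_Cons[simp]: "pA n A (e # L) = (A - e \<cdot>\<^sub>m 1\<^sub>m n) * pA n A L" by (simp add: pA_def)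

lemma C_carrier[simp]: "A \<in> carrier_mat n n \<Longrightarrow> A - e \<cdot>\<^sub>m 1\<^sub>m n \<in> carrier_mat n n"
  by (rule minus_carrier_mat) simp

lemma pA_carrier[simp]: "A \<in> carrier_mat n n \<Longrightarrow> pA n A L \<in> carrier_mat n n"
  by (induct L) auto

lemma foldr_gen: assumes A: "A \<in> carrier_mat n n" and M0: "M0 \<in> carrier_mat n n"
  shows "foldr (\<lambda>e M. (A - e \<cdot>\<^sub>m 1\<^sub>m n) * M) L M0 = pA n A L * M0"
proof (induct L)
  case Nil then show ?case using M0 by simp
next
  case (Cons a L)
  then show ?case using A M0 by (simp add: assoc_mult_mat[of _ n n _ n _ n])
qed

lemma rprod_pA: assumes A: "A \<in> carrier_mat n n" shows "rprod n A L = pA n A L"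
proof (induct L rule: rev_induct)
  case Nil then show ?case by (simp add: rprod_def)
next
  case (snoc e L)
  have "pA n A (L @ [e]) = pA n A L * (A - e \<cdot>\<^sub>m 1\<^sub>m n)"
    unfolding pA_def foldr_append using foldr_gen[OF A, of "A - e \<cdot>\<^sub>m 1\<^sub>m n" L] A
    by (simp add: pA_def)
  then show ?case using snoc by (simp add: rprod_snoc)
qed

lemma C_comm: fixes A M :: "real mat" assumes A: "A \<in> carrier_mat n n" and M: "M \<in> carrier_mat n n" and AM: "A * M = M * A"
  shows "(A - e \<cdot>\<^sub>m 1\<^sub>m n) * M = M * (A - e \<cdot>\<^sub>m 1\<^sub>m n)"
proof -
  have I: "1\<^sub>m n \<in> carrier_mat n n" by simp
  have "(A - e \<cdot>\<^sub>m 1\<^sub>m n) * M = A * M - e \<cdot>\<^sub>m M"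
    using minus_mult_distrib_mat[OF A smult_carrier_mat[OF I] M] mult_smult_assoc_mat[OF I M] M by simp
  moreover have "M * (A - e \<cdot>\<^sub>m 1\<^sub>m n) = M * A - e \<cdot>\<^sub>m M"
    using mult_minus_distrib_mat[OF M A smult_carrier_mat[OF I]] mult_smult_distrib[OF M I] M by simp
  ultimately show ?thesis using AM by simp
qed

lemma A_pA_comm: assumes A: "A \<in> carrier_mat n n" shows "A * pA n A L = pA n A L * A"
proof (induct L)
  case Nil then show ?case using A by simp
next
  case (Cons a L)
  have c: "A * (A - a \<cdot>\<^sub>m 1\<^sub>m n) = (A - a \<cdot>\<^sub>m 1\<^sub>m n) * A" using C_comm[OF A A] by simp
  have "A * pA n A (a # L) = (A * (A - a \<cdot>\<^sub>m 1\<^sub>m n)) * pA n A L"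
    using A by (simp add: assoc_mult_mat[of _ n n _ n _ n])
  also have "\<dots> = (A - a \<cdot>\<^sub>m 1\<^sub>m n) * (A * pA n A L)" unfolding c
    using A by (simp add: assoc_mult_mat[of _ n n _ n _ n])
  also have "\<dots> = pA n A (a # L) * A" unfolding Cons
    using A by (simp add: assoc_mult_mat[of _ n n _ n _ n])
  finally show ?case .
qed

lemma pA_remove1: assumes A: "A \<in> carrier_mat n n" and e: "e \<in> set L"
  shows "pA n A L = (A - e \<cdot>\<^sub>m 1\<^sub>m n) * pA n A (remove1 e L)"
  using e
proof (induct L)
  case Nil then show ?case by simp
next
  case (Cons a L)
  show ?case
  proof (cases "a = e")
    case True then show ?thesis by simp
  next
    case False
    hence eL: "e \<in> set L" using Cons by simp
    let ?R = "pA n A (remove1 e L)"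
    have R: "?R \<in> carrier_mat n n" using A by simp
    have c: "(A - a \<cdot>\<^sub>m 1\<^sub>m n) * (A - e \<cdot>\<^sub>m 1\<^sub>m n) = (A - e \<cdot>\<^sub>m 1\<^sub>m n) * (A - a \<cdot>\<^sub>m 1\<^sub>m n)"
      using C_comm[OF A C_carrier[OF A]] C_comm[OF A A] by simp
    have "pA n A (a # L) = (A - a \<cdot>\<^sub>m 1\<^sub>m n) * ((A - e \<cdot>\<^sub>m 1\<^sub>m n) * ?R)" using Cons(1)[OF eL] by simp
    also have "\<dots> = ((A - a \<cdot>\<^sub>m 1\<^sub>m n) * (A - e \<cdot>\<^sub>m 1\<^sub>m n)) * ?R"
      using A R by (simp add: assoc_mult_mat[of _ n n _ n _ n])
    also have "\<dots> = (A - e \<cdot>\<^sub>m 1\<^sub>m n) * ((A - a \<cdot>\<^sub>m 1\<^sub>m n) * ?R)" unfolding c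
      using A R by (simp add: assoc_mult_mat[of _ n n _ n _ n])
    finally show ?thesis using False by simp
  qed
qed

lemma pA_mset: assumes A: "A \<in> carrier_mat n n" shows "mset L = mset L' \<Longrightarrow> pA n A L = pA n A L'"
proof (induct L arbitrary: L')
  case Nil then show ?case by simp
next
  case (Cons a L)
  have a: "a \<in> set L'" using Cons(2) by (metis list.set_intros(1) set_mset_mset)
  have "mset L = mset (remove1 a L')" by (simp add: Cons(2)[symmetric])
  then have "pA n A L = pA n A (remove1 a L')" by (rule Cons(1))
  then show ?case using pA_remove1[OF A a] by simp
qed

lemma sym_square_cancel:
  fixes C G :: "real mat"
  assumes C: "C \<in> carrier_mat n n" and G: "G \<in> carrier_mat n n"
    and sym: "\<And>i j. i < n \<Longrightarrow> j < n \<Longrightarrow> C $$ (i,j) = C $$ (j,i)"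
    and z: "C * (C * G) = 0\<^sub>m n n"
  shows "C * G = 0\<^sub>m n n"
proof -
  let ?H = "C * G"
  have H: "?H \<in> carrier_mat n n" using C G by simp
  have col0: "?H $$ (i,j) = 0" if i: "i < n" and j: "j < n" for i j
  proof -
    have "(\<Sum>i<n. (?H $$ (i,j))^2) = (\<Sum>i<n. ?H $$ (i,j) * (\<Sum>l<n. C $$ (i,l) * G $$ (l,j)))"
      by (rule sum.cong) (auto simp: power2_eq_square mult_entry[OF C G _ j])
    also have "\<dots> = (\<Sum>i<n. \<Sum>l<n. ?H $$ (i,j) * C $$ (i,l) * G $$ (l,j))"
      by (simp add: sum_distrib_left mult.assoc)
    also have "\<dots> = (\<Sum>l<n. \<Sum>i<n. ?H $$ (i,j) * C $$ (i,l) * G $$ (l,j))"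
      by (rule sum.swap)
    also have "\<dots> = (\<Sum>l<n. G $$ (l,j) * (\<Sum>i<n. C $$ (l,i) * ?H $$ (i,j)))"
      by (rule sum.cong[OF refl], simp add: sum_distrib_left, rule sum.cong[OF refl], simp add: sym)
    also have "\<dots> = (\<Sum>l<n. G $$ (l,j) * (C * ?H) $$ (l,j))"
      by (rule sum.cong) (auto simp: mult_entry[OF C H _ j])
    also have "\<dots> = 0" using z j by simp
    finally have "(\<Sum>i<n. (?H $$ (i,j))^2) = 0" .
    hence "\<forall>i\<in>{..<n}. (?H $$ (i,j))^2 = 0" by (subst (asm) sum_nonneg_eq_0_iff) auto
    thus ?thesis using i by simp
  qed
  show ?thesis by (rule eq_matI) (use col0 C G in auto)
qed



lemma pA_remdups:
  fixes A :: "real mat"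
  assumes A: "A \<in> carrier_mat n n" and sym: "\<And>i j. i < n \<Longrightarrow> j < n \<Longrightarrow> A $$ (i,j) = A $$ (j,i)"
  shows "pA n A L = 0\<^sub>m n n \<Longrightarrow> pA n A (remdups L) = 0\<^sub>m n n"
proof (induct "length L" arbitrary: L rule: less_induct)
  case less
  show ?case
  proof (cases "distinct L")
    case True then show ?thesis using less(2) by (simp add: distinct_remdups_id)
  next
    case False
    then obtain e where "count (mset L) e \<noteq> (if e \<in> set L then 1 else 0)"
      unfolding distinct_count_atmost_1 by blast
    hence eL: "e \<in> set L" and c1: "count (mset L) e \<noteq> 1"
      by (auto split: if_splits simp: count_eq_zero_iff[symmetric])
    have "count (mset L) e \<noteq> 0" using eL by (simp add: count_eq_zero_iff)
    hence c: "count (mset L) e \<ge> 2" using c1 by linarith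
    let ?L1 = "remove1 e L"
    have "count (mset ?L1) e \<ge> 1" using c by simp
    hence eL1: "e \<in> set ?L1" by (metis count_eq_zero_iff not_one_le_zero set_mset_mset)
    let ?C = "A - e \<cdot>\<^sub>m 1\<^sub>m n"
    have Csym: "\<And>i j. i < n \<Longrightarrow> j < n \<Longrightarrow> ?C $$ (i,j) = ?C $$ (j,i)" using A sym by auto
    have "?C * (?C * pA n A (remove1 e ?L1)) = 0\<^sub>m n n"
      using less(2) pA_remove1[OF A eL] pA_remove1[OF A eL1] by simp
    hence z: "pA n A ?L1 = 0\<^sub>m n n"
      using sym_square_cancel[OF C_carrier[OF A] pA_carrier[OF A] Csym] pA_remove1[OF A eL1] by simp
    have len: "length ?L1 < length L" using eL length_pos_if_in_set[OF eL] by (simp add: length_remove1)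
    have IH: "pA n A (remdups ?L1) = 0\<^sub>m n n" using less(1)[OF len z] .
    have "set ?L1 = set L"
    proof
      show "set ?L1 \<subseteq> set L" by (rule set_remove1_subset)
      show "set L \<subseteq> set ?L1"
      proof
        fix x assume "x \<in> set L"
        then show "x \<in> set ?L1" using eL1 by (cases "x = e") (auto simp: in_set_remove1)
      qed
    qed
    hence "mset (remdups ?L1) = mset (remdups L)"
      by (simp add: set_eq_iff_mset_eq_distinct[symmetric])
    thus ?thesis using IH pA_mset[OF A] by metis
  qed
qed



lemma sym_annihilator:
  fixes A :: "real mat"
  assumes A: "A \<in> carrier_mat n n" and sym: "\<And>i j. i < n \<Longrightarrow> j < n \<Longrightarrow> A $$ (i,j) = A $$ (j,i)"
  shows "\<exists>L. distinct L \<and> set L = {\<theta>. eigenvalue A \<theta>} \<and> pA n A L = 0\<^sub>m n n"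
proof -
  obtain es where es: "char_poly A = (\<Prod>e\<leftarrow>es. [:-e,1:])" using sym_char_poly_splits[OF A sym] by blast
  obtain B P Q where sd: "schur_decomposition A es = (B,P,Q)" by (cases "schur_decomposition A es") auto
  from schur_decomposition[OF A es sd] have
    sw: "similar_mat_wit A B P Q" and ut: "upper_triangular B" and dg: "diag_mat B = es" by auto
  from sw A have B: "B \<in> carrier_mat n n" and P: "P \<in> carrier_mat n n" and Q: "Q \<in> carrier_mat n n"
    and PQ: "P * Q = 1\<^sub>m n" and QP: "Q * P = 1\<^sub>m n" and APBQ: "A = P * B * Q"
    unfolding similar_mat_wit_def Let_def by auto
  have "map (\<lambda>i. B $$ (i,i)) [0..<n] = es" using dg B unfolding diag_mat_def by auto
  hence z: "\<forall>i<n. \<forall>j<n. rprod n B es $$ (i,j) = 0" using tri_CH[OF B ut le_refl] by simp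
  have "rprod n B es = 0\<^sub>m n n"
    by (rule eq_matI) (use z rprod_carrier[OF B, of es] in auto)
  hence "rprod n A es = 0\<^sub>m n n" using rprod_similar[OF A B P Q PQ QP APBQ] P Q by simp
  hence "pA n A es = 0\<^sub>m n n" using rprod_pA[OF A] by simp
  hence z2: "pA n A (remdups es) = 0\<^sub>m n n" using pA_remdups[OF A sym] by blast
  have "set es = {\<theta>. eigenvalue A \<theta>}"
    using eigenvalue_root_char_poly[OF A] unfolding es poly_prod_list
    by (auto simp: prod_list_zero_iff)
  thus ?thesis using z2 by (intro exI[of _ "remdups es"]) auto
qed


lemma pow_mat_Suc_left: "(A::'a::semiring_1 mat) \<in> carrier_mat n n \<Longrightarrow> A ^\<^sub>m Suc k = A * A ^\<^sub>m k"
proof (induct k)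
  case 0 then show ?case by simp
next
  case (Suc k)
  have "A ^\<^sub>m Suc (Suc k) = (A * A ^\<^sub>m k) * A" using Suc by simp
  also have "\<dots> = A * (A ^\<^sub>m k * A)" using Suc.prems by (simp add: assoc_mult_mat[of _ n n _ n _ n])
  finally show ?case by simp
qed
lemma pow_mat_add: "(A::'a::semiring_1 mat) \<in> carrier_mat n n \<Longrightarrow> A ^\<^sub>m (a + b) = A ^\<^sub>m a * A ^\<^sub>m b"
proof (induct b)
  case 0 then show ?case by simp
next
  case (Suc b)
  then show ?case by (simp add: assoc_mult_mat[of _ n n _ n _ n])
qed

definition Tm :: "real mat \<Rightarrow> real \<Rightarrow> nat \<Rightarrow> nat \<Rightarrow> nat \<Rightarrow> complex" where
  "Tm A t i j k = (\<i> * complex_of_real t) ^ k / of_nat (fact k) * complex_of_real ((A ^\<^sub>m k) $$ (i, j))"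

lemma Tm_summable_norm:
  fixes A :: "real mat"
  assumes bnd: "\<And>k. \<bar>(A ^\<^sub>m k) $$ (i,j)\<bar> \<le> B ^ k"
  shows "summable (\<lambda>k. norm (Tm A t i j k))"
proof (rule summable_comparison_test[OF _ summable_exp[of "\<bar>t\<bar> * B"]])
  show "\<exists>N. \<forall>k\<ge>N. norm (norm (Tm A t i j k)) \<le> inverse (fact k) * (\<bar>t\<bar> * B) ^ k"
  proof (intro exI allI impI)
    fix k :: nat
    have "norm (norm (Tm A t i j k)) = \<bar>t\<bar> ^ k / fact k * \<bar>(A ^\<^sub>m k) $$ (i,j)\<bar>"
      unfolding Tm_def by (simp add: norm_mult norm_divide norm_power)
    also have "\<dots> \<le> \<bar>t\<bar> ^ k / fact k * B ^ k"
      by (rule mult_left_mono[OF bnd]) simp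
    also have "\<dots> = inverse (fact k) * (\<bar>t\<bar> * B) ^ k" by (simp add: power_mult_distrib field_simps)
    finally show "norm (norm (Tm A t i j k)) \<le> inverse (fact k) * (\<bar>t\<bar> * B) ^ k" .
  qed
qed

lemma binom_exp: "(\<Sum>i\<le>m. (x::complex) ^ i / of_nat (fact i) * (y ^ (m - i) / of_nat (fact (m - i)))) = (x + y) ^ m / of_nat (fact m)"
  using exp_series_add_commuting[of x y m] by (simp add: scaleR_conv_of_real divide_inverse mult_ac)


lemma unitary_entry:
  fixes A :: "real mat"
  assumes A: "A \<in> carrier_mat n n"
    and bnd: "\<And>k i j. i < n \<Longrightarrow> j < n \<Longrightarrow> \<bar>(A ^\<^sub>m k) $$ (i,j)\<bar> \<le> B ^ k"
    and z: "z < n" and z': "z' < n"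
  shows "(\<Sum>w<n. suminf (Tm A t z w) * suminf (Tm A (-t) w z')) = (if z = z' then 1 else 0)"
proof -
  define g where "g w m = (\<Sum>i\<le>m. Tm A t z w i * Tm A (-t) w z' (m - i))" for w m
  have 1: "suminf (Tm A t z w) * suminf (Tm A (-t) w z') = suminf (g w)" if "w < n" for w
    unfolding g_def by (rule Cauchy_product[OF Tm_summable_norm Tm_summable_norm]) (use bnd z z' that in auto)
  have sg: "summable (g w)" if "w < n" for w
    unfolding g_def by (rule summable_Cauchy_product[OF Tm_summable_norm Tm_summable_norm]) (use bnd z z' that in auto)
  have "(\<Sum>w<n. suminf (Tm A t z w) * suminf (Tm A (-t) w z')) = (\<Sum>w<n. suminf (g w))"
    using 1 by simp
  also have "\<dots> = (\<Sum>m. \<Sum>w<n. g w m)" by (rule suminf_sum[symmetric]) (use sg in auto)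
  also have "\<dots> = (\<Sum>m. if m = 0 then (if z = z' then 1 else 0) else 0)"
  proof (rule arg_cong[where f = suminf], rule ext)
    fix m
    define x where "x = \<i> * complex_of_real t"
    define y where "y = \<i> * complex_of_real (-t)"
    have xy: "x + y = 0" unfolding x_def y_def by simp
    have "(\<Sum>w<n. g w m) = (\<Sum>w<n. \<Sum>i\<le>m. (x ^ i / of_nat (fact i) * (y ^ (m - i) / of_nat (fact (m - i))))
            * complex_of_real ((A ^\<^sub>m i) $$ (z, w) * (A ^\<^sub>m (m - i)) $$ (w, z')))"
      unfolding g_def Tm_def x_def y_def by (simp add: mult_ac)
    also have "\<dots> = (\<Sum>i\<le>m. (x ^ i / of_nat (fact i) * (y ^ (m - i) / of_nat (fact (m - i))))
            * complex_of_real (\<Sum>w<n. (A ^\<^sub>m i) $$ (z, w) * (A ^\<^sub>m (m - i)) $$ (w, z')))"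
      by (subst sum.swap) (simp add: sum_distrib_left)
    also have "\<dots> = (\<Sum>i\<le>m. (x ^ i / of_nat (fact i) * (y ^ (m - i) / of_nat (fact (m - i))))
            * complex_of_real ((A ^\<^sub>m m) $$ (z, z')))"
    proof (rule sum.cong[OF refl])
      fix i assume "i \<in> {..m}"
      hence "A ^\<^sub>m m = A ^\<^sub>m i * A ^\<^sub>m (m - i)" using pow_mat_add[OF A, of i "m - i"] by simp
      hence "(A ^\<^sub>m m) $$ (z, z') = (\<Sum>w<n. (A ^\<^sub>m i) $$ (z, w) * (A ^\<^sub>m (m - i)) $$ (w, z'))"
        using mult_entry[OF pow_carrier_mat[OF A] pow_carrier_mat[OF A] z z'] by simp
      thus "(x ^ i / of_nat (fact i) * (y ^ (m - i) / of_nat (fact (m - i))))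
            * complex_of_real (\<Sum>w<n. (A ^\<^sub>m i) $$ (z, w) * (A ^\<^sub>m (m - i)) $$ (w, z')) =
           (x ^ i / of_nat (fact i) * (y ^ (m - i) / of_nat (fact (m - i))))
            * complex_of_real ((A ^\<^sub>m m) $$ (z, z'))" by simp
    qed
    also have "\<dots> = (x + y) ^ m / of_nat (fact m) * complex_of_real ((A ^\<^sub>m m) $$ (z, z'))"
      by (simp only: sum_distrib_right[symmetric] binom_exp)
    also have "\<dots> = (if m = 0 then (if z = z' then 1 else 0) else 0)"
      using xy A z z' by auto
    finally show "(\<Sum>w<n. g w m) = (if m = 0 then (if z = z' then 1 else 0) else 0)" .
  qed
  also have "\<dots> = (if z = z' then 1 else 0)"
    using sums_unique[OF sums_single[of 0 "\<lambda>_. (if z = z' then 1 else 0 :: complex)"]] by simp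
  finally show ?thesis .
qed


lemma cnj_suminf_Tm:
  assumes bnd: "\<And>k. \<bar>(A ^\<^sub>m k) $$ (i,j)\<bar> \<le> B ^ k"
  shows "cnj (suminf (Tm A t i j)) = suminf (Tm A (-t) i j)"
proof -
  have s: "summable (Tm A t i j)" by (rule summable_norm_cancel[OF Tm_summable_norm[OF bnd]])
  have "(\<lambda>k. cnj (Tm A t i j k)) sums cnj (suminf (Tm A t i j))"
    using summable_sums[OF s] by (simp add: sums_cnj)
  moreover have "(\<lambda>k. cnj (Tm A t i j k)) = Tm A (-t) i j"
    by (rule ext) (simp add: Tm_def)
  ultimately show ?thesis by (metis sums_unique)
qed

lemma transition_norm_le1:
  fixes A :: "real mat"
  assumes A: "A \<in> carrier_mat n n"
    and bnd: "\<And>k i j. i < n \<Longrightarrow> j < n \<Longrightarrow> \<bar>(A ^\<^sub>m k) $$ (i,j)\<bar> \<le> B ^ k"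
    and sym: "\<And>k i j. i < n \<Longrightarrow> j < n \<Longrightarrow> (A ^\<^sub>m k) $$ (i,j) = (A ^\<^sub>m k) $$ (j,i)"
    and z: "z < n" and w: "w < n"
  shows "cmod (suminf (Tm A t z w)) \<le> 1"
proof -
  define U where "U w = suminf (Tm A t z w)" for w
  have "Tm A (-t) w' z = Tm A (-t) z w'" if "w' < n" for w'
    using sym[OF that z] by (simp add: Tm_def fun_eq_iff)
  have c: "cnj (U w') = suminf (Tm A (-t) w' z)" if "w' < n" for w'
  proof -
    have "Tm A (-t) w' z = Tm A (-t) z w'" using sym[OF that z] by (simp add: Tm_def fun_eq_iff)
    thus ?thesis unfolding U_def using cnj_suminf_Tm[of A z w' B t] bnd z that by simp
  qed
  have "(\<Sum>w'<n. U w' * cnj (U w')) = 1"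
    using unitary_entry[OF A bnd z z, of t] c unfolding U_def by simp
  hence "(\<Sum>w'<n. complex_of_real ((cmod (U w'))^2)) = 1"
    by (simp add: complex_norm_square del: of_real_power)
  hence S: "(\<Sum>w'<n. (cmod (U w'))^2) = 1"
    by (metis of_real_eq_1_iff of_real_sum)
  have "(cmod (U w))^2 \<le> (\<Sum>w'<n. (cmod (U w'))^2)"
    by (rule member_le_sum) (use w in auto)
  hence "(cmod (U w))^2 \<le> 1" using S by simp
  thus ?thesis unfolding U_def by (simp add: power_le_one_iff abs_square_le_1)
qed



lemma adj_carrier: "adj_mat n E \<in> carrier_mat n n"
  unfolding adj_mat_def by simp

lemma adj_entry: "i < n \<Longrightarrow> j < n \<Longrightarrow> adj_mat n E $$ (i,j) = (if E i j then 1 else 0)"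
  unfolding adj_mat_def by simp

lemma adj_sym: "simple_graph n E \<Longrightarrow> i < n \<Longrightarrow> j < n \<Longrightarrow> adj_mat n E $$ (i,j) = adj_mat n E $$ (j,i)"
  unfolding simple_graph_def by (simp add: adj_entry)

lemma pow_entry_Suc: "A \<in> carrier_mat n n \<Longrightarrow> i < n \<Longrightarrow> j < n \<Longrightarrow>
  (A ^\<^sub>m Suc k) $$ (i,j) = (\<Sum>l<n. (A ^\<^sub>m k) $$ (i,l) * A $$ (l,j))"
  using mult_entry[of "A ^\<^sub>m k" n A i j] by simp

lemma pow_entry_Suc_left: "A \<in> carrier_mat n n \<Longrightarrow> i < n \<Longrightarrow> j < n \<Longrightarrow>
  (A ^\<^sub>m Suc k) $$ (i,j) = (\<Sum>l<n. A $$ (i,l) * (A ^\<^sub>m k) $$ (l,j))"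
  using mult_entry[of A n "A ^\<^sub>m k" i j] pow_mat_Suc_left[of A n k] by simp

lemma pow_sym:
  fixes A :: "real mat"
  assumes A: "A \<in> carrier_mat n n" and sym: "\<And>i j. i < n \<Longrightarrow> j < n \<Longrightarrow> A $$ (i,j) = A $$ (j,i)"
  shows "i < n \<Longrightarrow> j < n \<Longrightarrow> (A ^\<^sub>m k) $$ (i,j) = (A ^\<^sub>m k) $$ (j,i)"
proof (induct k arbitrary: i j)
  case 0 then show ?case using A by auto
next
  case (Suc k)
  have "(A ^\<^sub>m Suc k) $$ (i,j) = (\<Sum>l<n. (A ^\<^sub>m k) $$ (i,l) * A $$ (l,j))"
    using pow_entry_Suc[OF A Suc.prems] .
  also have "\<dots> = (\<Sum>l<n. A $$ (j,l) * (A ^\<^sub>m k) $$ (l,i))"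
    by (rule sum.cong) (use Suc sym in auto)
  also have "\<dots> = (A ^\<^sub>m Suc k) $$ (j,i)" using pow_entry_Suc_left[OF A Suc.prems(2,1)] by simp
  finally show ?case .
qed

lemma adj_pow_nonneg: "i < n \<Longrightarrow> j < n \<Longrightarrow> (adj_mat n E ^\<^sub>m k) $$ (i,j) \<ge> 0"
proof (induct k arbitrary: j)
  case 0 then show ?case using adj_carrier[of n E] by auto
next
  case (Suc k)
  then show ?case using pow_entry_Suc[OF adj_carrier Suc.prems]
    by (auto intro!: sum_nonneg simp: adj_entry)
qed

lemma adj_pow_bound: "i < n \<Longrightarrow> j < n \<Longrightarrow> \<bar>(adj_mat n E ^\<^sub>m k) $$ (i,j)\<bar> \<le> real n ^ k"
proof (induct k arbitrary: j)
  case 0 then show ?case using adj_carrier[of n E] by auto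
next
  case (Suc k)
  have "(adj_mat n E ^\<^sub>m Suc k) $$ (i,j) = (\<Sum>l<n. (adj_mat n E ^\<^sub>m k) $$ (i,l) * adj_mat n E $$ (l,j))"
    using pow_entry_Suc[OF adj_carrier Suc.prems] .
  also have "\<dots> \<le> (\<Sum>l<n. real n ^ k)"
  proof (rule sum_mono)
    fix l assume l: "l \<in> {..<n}"
    have "(adj_mat n E ^\<^sub>m k) $$ (i,l) \<le> real n ^ k" using Suc(1)[of l] l Suc.prems by auto
    moreover have "(adj_mat n E ^\<^sub>m k) $$ (i,l) \<ge> 0" using adj_pow_nonneg l Suc.prems by auto
    ultimately show "(adj_mat n E ^\<^sub>m k) $$ (i,l) * adj_mat n E $$ (l,j) \<le> real n ^ k"
      using l Suc.prems by (auto simp: adj_entry)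
  qed
  also have "\<dots> = real n ^ Suc k" by simp
  finally show ?case using adj_pow_nonneg[OF Suc.prems, of E "Suc k"] by simp
qed

lemma adj_pow_walk: "i < n \<Longrightarrow> j < n \<Longrightarrow> (adj_mat n E ^\<^sub>m k) $$ (i,j) \<noteq> 0 \<Longrightarrow> walk_of_len n E k i j"
proof (induct k arbitrary: j)
  case 0
  then have "i = j" using adj_carrier[of n E] by (auto split: if_splits)
  then show ?case using 0 unfolding walk_of_len_def by (intro exI[of _ "\<lambda>_. i"]) auto
next
  case (Suc k)
  have "(\<Sum>l<n. (adj_mat n E ^\<^sub>m k) $$ (i,l) * adj_mat n E $$ (l,j)) \<noteq> 0"
    using Suc.prems pow_entry_Suc[OF adj_carrier Suc.prems(1,2)] by simp
  then obtain l where l: "l < n" "(adj_mat n E ^\<^sub>m k) $$ (i,l) * adj_mat n E $$ (l,j) \<noteq> 0"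
    by (meson lessThan_iff sum.neutral)
  hence Elj: "E l j" and nz: "(adj_mat n E ^\<^sub>m k) $$ (i,l) \<noteq> 0" using Suc.prems by (auto simp: adj_entry split: if_splits)
  obtain p where p: "p 0 = i" "p k = l" "\<forall>m\<le>k. p m < n" "\<forall>m<k. E (p m) (p (Suc m))"
    using Suc(1)[OF Suc.prems(1) l(1) nz] unfolding walk_of_len_def by blast
  show ?case unfolding walk_of_len_def
    by (rule exI[of _ "p(Suc k := j)"]) (use p Elj Suc.prems in \<open>auto simp: le_Suc_eq less_Suc_eq\<close>)
qed

lemma walk_adj_pow: "walk_of_len n E k i j \<Longrightarrow> (adj_mat n E ^\<^sub>m k) $$ (i,j) > 0"
proof (induct k arbitrary: j)
  case 0
  then have "i = j" "i < n" unfolding walk_of_len_def by auto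
  then show ?case using adj_carrier[of n E] by auto
next
  case (Suc k)
  from Suc.prems obtain p where p: "p 0 = i" "p (Suc k) = j" "\<forall>m\<le>Suc k. p m < n" "\<forall>m<Suc k. E (p m) (p (Suc m))"
    unfolding walk_of_len_def by blast
  have wk: "walk_of_len n E k i (p k)" unfolding walk_of_len_def
    by (rule exI[of _ p]) (use p in auto)
  have jn: "j < n" and ln: "p k < n" and i: "i < n" using p by auto
  have Ek: "E (p k) j" using p by auto
  have pos: "(adj_mat n E ^\<^sub>m k) $$ (i, p k) * adj_mat n E $$ (p k, j) > 0"
    using Suc(1)[OF wk] Ek ln jn by (simp add: adj_entry)
  have "(adj_mat n E ^\<^sub>m k) $$ (i, p k) * adj_mat n E $$ (p k, j) \<le> (\<Sum>l<n. (adj_mat n E ^\<^sub>m k) $$ (i,l) * adj_mat n E $$ (l,j))"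
    by (rule member_le_sum) (use ln i jn adj_pow_nonneg in \<open>auto simp: adj_entry\<close>)
  then show ?case using pos pow_entry_Suc[OF adj_carrier i jn] by simp
qed



lemma left_mult_comb:
  fixes A :: "real mat"
  assumes A: "A \<in> carrier_mat n n" and i: "i < n" and j: "j < n"
  shows "(\<Sum>l<n. A $$ (i,l) * (\<Sum>m<N. c m * (A ^\<^sub>m m) $$ (l,j))) = (\<Sum>m<N. c m * (A ^\<^sub>m Suc m) $$ (i,j))"
proof -
  have "(\<Sum>l<n. A $$ (i,l) * (\<Sum>m<N. c m * (A ^\<^sub>m m) $$ (l,j))) = (\<Sum>l<n. \<Sum>m<N. c m * (A $$ (i,l) * (A ^\<^sub>m m) $$ (l,j)))"
    by (simp add: sum_distrib_left mult_ac)
  also have "\<dots> = (\<Sum>m<N. \<Sum>l<n. c m * (A $$ (i,l) * (A ^\<^sub>m m) $$ (l,j)))" by (rule sum.swap)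
  also have "\<dots> = (\<Sum>m<N. c m * (A ^\<^sub>m Suc m) $$ (i,j))"
    by (rule sum.cong[OF refl], subst pow_entry_Suc_left[OF A i j]) (simp add: sum_distrib_left)
  finally show ?thesis .
qed

lemma C_mult_entry:
  fixes A M :: "real mat"
  assumes A: "A \<in> carrier_mat n n" and M: "M \<in> carrier_mat n n" and i: "i < n" and j: "j < n"
  shows "((A - e \<cdot>\<^sub>m 1\<^sub>m n) * M) $$ (i,j) = (\<Sum>l<n. A $$ (i,l) * M $$ (l,j)) - e * M $$ (i,j)"
proof -
  have "((A - e \<cdot>\<^sub>m 1\<^sub>m n) * M) $$ (i,j) = (\<Sum>l<n. (A $$ (i,l) - (if i = l then e else 0)) * M $$ (l,j))"
    using mult_entry[OF C_carrier[OF A] M i j] A i by (auto intro!: sum.cong)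
  also have "\<dots> = (\<Sum>l<n. A $$ (i,l) * M $$ (l,j)) - (\<Sum>l<n. (if i = l then e * M $$ (l,j) else 0))"
  proof -
    have "(\<Sum>l<n. (A $$ (i,l) - (if i = l then e else 0)) * M $$ (l,j)) = (\<Sum>l<n. A $$ (i,l) * M $$ (l,j) - (if i = l then e * M $$ (l,j) else 0))"
      by (rule sum.cong) (auto simp: algebra_simps)
    thus ?thesis by (simp only: sum_subtractf)
  qed
  also have "\<dots> = (\<Sum>l<n. A $$ (i,l) * M $$ (l,j)) - e * M $$ (i,j)"
    using i by (simp add: sum.delta)
  finally show ?thesis .
qed

lemma pA_expand:
  fixes A :: "real mat"
  assumes A: "A \<in> carrier_mat n n"
  shows "\<exists>c. \<forall>i j. i < n \<longrightarrow> j < n \<longrightarrow> (pA n A L) $$ (i,j) = (A ^\<^sub>m length L) $$ (i,j) + (\<Sum>m<length L. c m * (A ^\<^sub>m m) $$ (i,j))"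
proof (induct L)
  case Nil then show ?case using A by auto
next
  case (Cons e L)
  then obtain c where c: "\<And>i j. i < n \<Longrightarrow> j < n \<Longrightarrow> (pA n A L) $$ (i,j) = (A ^\<^sub>m length L) $$ (i,j) + (\<Sum>m<length L. c m * (A ^\<^sub>m m) $$ (i,j))"
    by blast
  let ?N = "length L"
  define c' where "c' m = (if m = 0 then 0 else c (m - 1)) - e * (if m = ?N then 1 else c m)" for m
  show ?case
  proof (intro exI[of _ c'] allI impI)
    fix i j assume i: "i < n" and j: "j < n"
    have "(pA n A (e # L)) $$ (i,j) = (\<Sum>l<n. A $$ (i,l) * (pA n A L) $$ (l,j)) - e * (pA n A L) $$ (i,j)"
      using C_mult_entry[OF A pA_carrier[OF A] i j] by simp
    also have "(\<Sum>l<n. A $$ (i,l) * (pA n A L) $$ (l,j)) = (\<Sum>l<n. A $$ (i,l) * (A ^\<^sub>m ?N) $$ (l,j)) + (\<Sum>l<n. A $$ (i,l) * (\<Sum>m<?N. c m * (A ^\<^sub>m m) $$ (l,j)))"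
      using c j by (simp add: distrib_left sum.distrib)
    also have "\<dots> = (A ^\<^sub>m Suc ?N) $$ (i,j) + (\<Sum>m<?N. c m * (A ^\<^sub>m Suc m) $$ (i,j))"
      using left_mult_comb[OF A i j] pow_entry_Suc_left[OF A i j] by simp
    finally have 1: "(pA n A (e # L)) $$ (i,j) = (A ^\<^sub>m Suc ?N) $$ (i,j) + (\<Sum>m<?N. c m * (A ^\<^sub>m Suc m) $$ (i,j))
        - e * ((A ^\<^sub>m ?N) $$ (i,j) + (\<Sum>m<?N. c m * (A ^\<^sub>m m) $$ (i,j)))" using c[OF i j] by simp
    have 2: "(\<Sum>m<Suc ?N. c' m * (A ^\<^sub>m m) $$ (i,j)) =
       (\<Sum>m<Suc ?N. (if m = 0 then 0 else c (m - 1)) * (A ^\<^sub>m m) $$ (i,j))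
       - e * (\<Sum>m<Suc ?N. (if m = ?N then 1 else c m) * (A ^\<^sub>m m) $$ (i,j))"
    proof -
      have "(\<Sum>m<Suc ?N. c' m * (A ^\<^sub>m m) $$ (i,j)) = (\<Sum>m<Suc ?N. (if m = 0 then 0 else c (m - 1)) * (A ^\<^sub>m m) $$ (i,j)
           - e * ((if m = ?N then 1 else c m) * (A ^\<^sub>m m) $$ (i,j)))"
        by (rule sum.cong[OF refl]) (simp only: c'_def left_diff_distrib mult.assoc)
      thus ?thesis by (simp only: sum_subtractf sum_distrib_left)
    qed
    have 3: "(\<Sum>m<Suc ?N. (if m = 0 then 0 else c (m - 1)) * (A ^\<^sub>m m) $$ (i,j)) = (\<Sum>m<?N. c m * (A ^\<^sub>m Suc m) $$ (i,j))"
      by (subst sum.lessThan_Suc_shift) simp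
    have 4: "(\<Sum>m<Suc ?N. (if m = ?N then 1 else c m) * (A ^\<^sub>m m) $$ (i,j)) = (A ^\<^sub>m ?N) $$ (i,j) + (\<Sum>m<?N. c m * (A ^\<^sub>m m) $$ (i,j))"
      by (simp add: sum.lessThan_Suc)
    show "(pA n A (e # L)) $$ (i,j) = (A ^\<^sub>m length (e # L)) $$ (i,j) + (\<Sum>m<length (e # L). c' m * (A ^\<^sub>m m) $$ (i,j))"
      using 1 2 3 4 by simp
  qed
qed

lemma pow_span:
  fixes A :: "real mat"
  assumes A: "A \<in> carrier_mat n n"
    and rel: "\<And>i j. i < n \<Longrightarrow> j < n \<Longrightarrow> (A ^\<^sub>m Suc d) $$ (i,j) = (\<Sum>m<Suc d. a m * (A ^\<^sub>m m) $$ (i,j))"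
  shows "\<exists>b. \<forall>i j. i < n \<longrightarrow> j < n \<longrightarrow> (A ^\<^sub>m k) $$ (i,j) = (\<Sum>m<Suc d. b m * (A ^\<^sub>m m) $$ (i,j))"
proof (induct k)
  case 0
  show ?case
  proof (intro exI[of _ "\<lambda>m. if m = 0 then 1 else 0"] allI impI)
    fix i j assume "i < n" "j < n"
    have "(\<Sum>m<Suc d. (if m = 0 then 1 else 0) * (A ^\<^sub>m m) $$ (i,j)) = (\<Sum>m<Suc d. if m = 0 then (A ^\<^sub>m 0) $$ (i,j) else 0)"
      by (rule sum.cong) auto
    also have "\<dots> = (A ^\<^sub>m 0) $$ (i,j)" by (simp add: sum.delta)
    finally show "(A ^\<^sub>m 0) $$ (i,j) = (\<Sum>m<Suc d. (if m = 0 then 1 else 0) * (A ^\<^sub>m m) $$ (i,j))" by simp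
  qed
next
  case (Suc k)
  then obtain b where b: "\<And>i j. i < n \<Longrightarrow> j < n \<Longrightarrow> (A ^\<^sub>m k) $$ (i,j) = (\<Sum>m<Suc d. b m * (A ^\<^sub>m m) $$ (i,j))"
    by blast
  define b' where "b' m = (if m = 0 then 0 else b (m - 1)) + b d * a m" for m
  show ?case
  proof (intro exI[of _ b'] allI impI)
    fix i j assume i: "i < n" and j: "j < n"
    have "(A ^\<^sub>m Suc k) $$ (i,j) = (\<Sum>l<n. A $$ (i,l) * (A ^\<^sub>m k) $$ (l,j))"
      by (rule pow_entry_Suc_left[OF A i j])
    also have "\<dots> = (\<Sum>l<n. A $$ (i,l) * (\<Sum>m<Suc d. b m * (A ^\<^sub>m m) $$ (l,j)))"
      by (rule sum.cong) (use b j in auto)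
    also have "\<dots> = (\<Sum>m<Suc d. b m * (A ^\<^sub>m Suc m) $$ (i,j))" by (rule left_mult_comb[OF A i j])
    also have "\<dots> = (\<Sum>m<d. b m * (A ^\<^sub>m Suc m) $$ (i,j)) + b d * (\<Sum>m<Suc d. a m * (A ^\<^sub>m m) $$ (i,j))"
      by (simp only: sum.lessThan_Suc rel[OF i j])
    also have "\<dots> = (\<Sum>m<Suc d. b' m * (A ^\<^sub>m m) $$ (i,j))"
    proof -
      have "(\<Sum>m<Suc d. b' m * (A ^\<^sub>m m) $$ (i,j)) = (\<Sum>m<Suc d. (if m = 0 then 0 else b (m - 1)) * (A ^\<^sub>m m) $$ (i,j))
          + b d * (\<Sum>m<Suc d. a m * (A ^\<^sub>m m) $$ (i,j))"
        unfolding b'_def sum_distrib_left sum.distrib[symmetric] by (rule sum.cong) (simp_all add: algebra_simps)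
      moreover have "(\<Sum>m<Suc d. (if m = 0 then 0 else b (m - 1)) * (A ^\<^sub>m m) $$ (i,j)) = (\<Sum>m<d. b m * (A ^\<^sub>m Suc m) $$ (i,j))"
        by (subst sum.lessThan_Suc_shift) simp
      ultimately show ?thesis by simp
    qed
    finally show "(A ^\<^sub>m Suc k) $$ (i,j) = (\<Sum>m<Suc d. b' m * (A ^\<^sub>m m) $$ (i,j))" .
  qed
qed



theorem corollary4p2:
  fixes n :: nat and E :: "nat \<Rightarrow> nat \<Rightarrow> bool" and \<tau> :: real and u v :: nat
  assumes "simple_graph n E" and "connected_graph n E" and "spectrally_extremal n E"
    and "u < n" and "v < n"
    and "graph_dist n E u v = diameter n E"
    and "pst n E \<tau> u v"
  shows "\<forall>z<n. \<forall>w<n. graph_dist n E z w = diameter n E \<longrightarrow>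
           (adj_mat n E ^\<^sub>m diameter n E) $$ (z, w) \<le> (adj_mat n E ^\<^sub>m diameter n E) $$ (u, v) \<and>
           ((adj_mat n E ^\<^sub>m diameter n E) $$ (z, w) = (adj_mat n E ^\<^sub>m diameter n E) $$ (u, v)
              \<longleftrightarrow> pst n E \<tau> z w)"
proof -
  note sg = assms(1) and conn = assms(2) and se = assms(3) and un = assms(4) and vn = assms(5)
    and duv = assms(6) and pstuv = assms(7)
  define A where "A = adj_mat n E"
  define d where "d = diameter n E"
  have A: "A \<in> carrier_mat n n" unfolding A_def by (rule adj_carrier)
  have sym: "\<And>i j. i < n \<Longrightarrow> j < n \<Longrightarrow> A $$ (i,j) = A $$ (j,i)"
    unfolding A_def using adj_sym[OF sg] by blast
  have psym: "\<And>k i j. i < n \<Longrightarrow> j < n \<Longrightarrow> (A ^\<^sub>m k) $$ (i,j) = (A ^\<^sub>m k) $$ (j,i)"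
    using pow_sym[OF A sym] by blast
  have bnd: "\<And>k i j. i < n \<Longrightarrow> j < n \<Longrightarrow> \<bar>(A ^\<^sub>m k) $$ (i,j)\<bar> \<le> real n ^ k"
    unfolding A_def by (rule adj_pow_bound)
  obtain L where L: "distinct L" "set L = {\<theta>. eigenvalue A \<theta>}" "pA n A L = 0\<^sub>m n n"
    using sym_annihilator[OF A sym] by blast
  have lenL: "length L = Suc d"
    using se L(1,2) distinct_card[OF L(1)] unfolding spectrally_extremal_def A_def d_def by simp
  obtain c where c: "\<And>i j. i < n \<Longrightarrow> j < n \<Longrightarrow> (pA n A L) $$ (i,j) = (A ^\<^sub>m length L) $$ (i,j) + (\<Sum>m<length L. c m * (A ^\<^sub>m m) $$ (i,j))"
    using pA_expand[OF A, of L] by blast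
  have rel: "(A ^\<^sub>m Suc d) $$ (i,j) = (\<Sum>m<Suc d. (- c m) * (A ^\<^sub>m m) $$ (i,j))" if "i < n" "j < n" for i j
  proof -
    have "0 = (A ^\<^sub>m Suc d) $$ (i,j) + (\<Sum>m<Suc d. c m * (A ^\<^sub>m m) $$ (i,j))"
      using c[OF that] L(3) lenL that by simp
    thus ?thesis by (simp add: sum_negf eq_neg_iff_add_eq_0 add.commute)
  qed
  have "\<forall>k. \<exists>b. \<forall>i j. i < n \<longrightarrow> j < n \<longrightarrow> (A ^\<^sub>m k) $$ (i,j) = (\<Sum>m<Suc d. b m * (A ^\<^sub>m m) $$ (i,j))"
    using pow_span[OF A rel] by blast
  then obtain bb where bb: "\<And>k i j. i < n \<Longrightarrow> j < n \<Longrightarrow> (A ^\<^sub>m k) $$ (i,j) = (\<Sum>m<Suc d. bb k m * (A ^\<^sub>m m) $$ (i,j))"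
    by metis
  have atd: "(A ^\<^sub>m k) $$ (z,w) = bb k d * (A ^\<^sub>m d) $$ (z,w)"
    if z: "z < n" and w: "w < n" and dzw: "graph_dist n E z w = d" for k z w
  proof -
    have zero: "(A ^\<^sub>m m) $$ (z,w) = 0" if m: "m < d" for m
    proof (rule ccontr)
      assume "(A ^\<^sub>m m) $$ (z,w) \<noteq> 0"
      hence "walk_of_len n E m z w" using adj_pow_walk[OF z w] unfolding A_def by blast
      hence "graph_dist n E z w \<le> m" unfolding graph_dist_def by (rule Least_le)
      thus False using dzw m by simp
    qed
    have "(A ^\<^sub>m k) $$ (z,w) = (\<Sum>m<d. bb k m * (A ^\<^sub>m m) $$ (z,w)) + bb k d * (A ^\<^sub>m d) $$ (z,w)"
      using bb[OF z w, of k] by simp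
    also have "(\<Sum>m<d. bb k m * (A ^\<^sub>m m) $$ (z,w)) = 0" using zero by simp
    finally show ?thesis by simp
  qed
  define f where "f k = (\<i> * complex_of_real \<tau>) ^ k / of_nat (fact k) * complex_of_real (bb k d)" for k
  have Tmf: "Tm A \<tau> w z k = complex_of_real ((A ^\<^sub>m d) $$ (z,w)) * f k"
    if z: "z < n" and w: "w < n" and dzw: "graph_dist n E z w = d" for k z w
    unfolding Tm_def f_def using psym[OF w z, of k] atd[OF z w dzw, of k] by (simp add: mult_ac)
  have tr: "transition_entry n E \<tau> w z = suminf (Tm A \<tau> w z)" for w z
    unfolding transition_entry_def Tm_def A_def ..
  obtain k0 where "walk_of_len n E k0 u v" using conn un vn unfolding connected_graph_def by blast
  hence "walk_of_len n E (graph_dist n E u v) u v" unfolding graph_dist_def by (rule LeastI)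
  hence Duv: "(A ^\<^sub>m d) $$ (u,v) > 0" using walk_adj_pow duv unfolding A_def d_def by metis
  have duv': "graph_dist n E u v = d" using duv unfolding d_def .
  have sTm: "summable (Tm A \<tau> v u)"
    by (rule summable_norm_cancel[OF Tm_summable_norm[OF bnd[OF vn un]]])
  have sf: "summable f"
  proof -
    have "summable (\<lambda>k. complex_of_real (1 / (A ^\<^sub>m d) $$ (u,v)) * Tm A \<tau> v u k)"
      by (rule summable_mult[OF sTm])
    moreover have "(\<lambda>k. complex_of_real (1 / (A ^\<^sub>m d) $$ (u,v)) * Tm A \<tau> v u k) = f"
      using Tmf[OF un vn duv'] Duv by (auto simp: fun_eq_iff)
    ultimately show ?thesis by (simp only:)
  qed
  define F where "F = suminf f"
  have Tsum: "suminf (Tm A \<tau> w z) = complex_of_real ((A ^\<^sub>m d) $$ (z,w)) * F"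
    if z: "z < n" and w: "w < n" and dzw: "graph_dist n E z w = d" for z w
  proof -
    have "Tm A \<tau> w z = (\<lambda>k. complex_of_real ((A ^\<^sub>m d) $$ (z,w)) * f k)"
      using Tmf[OF z w dzw] by (simp add: fun_eq_iff)
    thus ?thesis unfolding F_def using suminf_mult[OF sf] by simp
  qed
  have nonneg: "(A ^\<^sub>m d) $$ (z,w) \<ge> 0" if "z < n" "w < n" for z w
    unfolding A_def using adj_pow_nonneg that by blast
  have cm: "cmod (suminf (Tm A \<tau> w z)) = (A ^\<^sub>m d) $$ (z,w) * cmod F"
    if z: "z < n" and w: "w < n" and dzw: "graph_dist n E z w = d" for z w
    using Tsum[OF z w dzw] nonneg[OF z w] by (simp add: norm_mult)
  have uv1: "(A ^\<^sub>m d) $$ (u,v) * cmod F = 1"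
    using pstuv cm[OF un vn duv'] tr unfolding pst_def by simp
  have Fpos: "cmod F > 0" using uv1 by (metis mult_zero_right norm_ge_zero order_le_less zero_neq_one)
  show ?thesis
  proof (intro allI impI conjI)
    fix z w assume z: "z < n" and w: "w < n" and dzw0: "graph_dist n E z w = diameter n E"
    have dzw: "graph_dist n E z w = d" using dzw0 unfolding d_def .
    have le1: "(A ^\<^sub>m d) $$ (z,w) * cmod F \<le> 1"
      using transition_norm_le1[OF A bnd psym w z, of \<tau>] cm[OF z w dzw] by simp
    show "(adj_mat n E ^\<^sub>m diameter n E) $$ (z, w) \<le> (adj_mat n E ^\<^sub>m diameter n E) $$ (u, v)"
    proof -
      have "(A ^\<^sub>m d) $$ (z,w) * cmod F \<le> (A ^\<^sub>m d) $$ (u,v) * cmod F" using le1 uv1 by simp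
      thus ?thesis using Fpos unfolding A_def d_def by simp
    qed
    show "(adj_mat n E ^\<^sub>m diameter n E) $$ (z, w) = (adj_mat n E ^\<^sub>m diameter n E) $$ (u, v) \<longleftrightarrow> pst n E \<tau> z w"
    proof -
      have "pst n E \<tau> z w \<longleftrightarrow> (A ^\<^sub>m d) $$ (z,w) * cmod F = 1"
        unfolding pst_def using tr cm[OF z w dzw] by simp
      also have "\<dots> \<longleftrightarrow> (A ^\<^sub>m d) $$ (z,w) * cmod F = (A ^\<^sub>m d) $$ (u,v) * cmod F" using uv1 by simp
      also have "\<dots> \<longleftrightarrow> (A ^\<^sub>m d) $$ (z,w) = (A ^\<^sub>m d) $$ (u,v)" using Fpos by simp
      finally show ?thesis unfolding A_def d_def by simp
    qed
  qed
qed


end
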